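(* Let $t,k,n$ be positive integers with $2\le t\le k\le n$. Then there exists a left-compressed non-trivial $t$-intersecting family $\mathcal F\subseteq\binom{[n]}{k}$ whose codegree squared sum ${\rm co}_2(\mathcal F)$ is maximum among all non-trivial $t$-intersecting subfamilies of $\binom{[n]}{k}$.
   Context: A family is $t$-intersecting if any two members share at least $t$ elements; it is trivial if all members share $t$ common elements, non-trivial otherwise. ${\rm co}_2(\mathcal F)=\sum_{E\in\binom{[n]}{k-1}}d(E)^2$ with $d(E)=|\{F\in\mathcal F:E\subseteq F\}|$. Shift: $\delta_{ij}(A)=(A\setminus\{j\})\cup\{i\}$ if $j\in A$, $i\notin A$, $(A\setminus\{j\})\cup\{i\}\notin\mathcal F$, else $\delta_{ij}(A)=A$; $\Delta_{ij}(\mathcal F)=\{\delta_{ij}(A):A\in\mathcal F\}$; $\mathcal F$ is left-compressed if $\Delta_{ij}(\mathcal F)=\mathcal F$ for all $1\le i<j\le n$. *)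

theory Defs
  imports Main
begin

definition ksubsets :: "nat \<Rightarrow> nat \<Rightarrow> nat set set" where
  "ksubsets n k = {A. A \<subseteq> {1..n} \<and> card A = k}"

definition t_intersecting :: "nat \<Rightarrow> nat set set \<Rightarrow> bool" where
  "t_intersecting t \<F> \<longleftrightarrow> (\<forall>A\<in>\<F>. \<forall>B\<in>\<F>. card (A \<inter> B) \<ge> t)"

definition trivial_family :: "nat \<Rightarrow> nat set set \<Rightarrow> bool" where
  "trivial_family t \<F> \<longleftrightarrow> (\<exists>T. card T = t \<and> (\<forall>F\<in>\<F>. T \<subseteq> F))"

definition codeg :: "nat set set \<Rightarrow> nat set \<Rightarrow> nat" where
  "codeg \<F> E = card {F\<in>\<F>. E \<subseteq> F}"

definition co2 :: "nat \<Rightarrow> nat \<Rightarrow> nat set set \<Rightarrow> nat" where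
  "co2 n k \<F> = (\<Sum>E\<in>ksubsets n (k - 1). (codeg \<F> E)^2)"

definition shift_set :: "nat \<Rightarrow> nat \<Rightarrow> nat set set \<Rightarrow> nat set \<Rightarrow> nat set" where
  "shift_set i j \<F> A =
     (if j \<in> A \<and> i \<notin> A \<and> (A - {j}) \<union> {i} \<notin> \<F> then (A - {j}) \<union> {i} else A)"

definition shift_family :: "nat \<Rightarrow> nat \<Rightarrow> nat set set \<Rightarrow> nat set set" where
  "shift_family i j \<F> = shift_set i j \<F> ` \<F>"

definition left_compressed :: "nat \<Rightarrow> nat set set \<Rightarrow> bool" where
  "left_compressed n \<F> \<longleftrightarrow>
     (\<forall>i j. 1 \<le> i \<and> i < j \<and> j \<le> n \<longrightarrow> shift_family i j \<F> = \<F>)"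

end

theory Submission
  imports Defs
begin


lemma finite_ksubsets: "finite (ksubsets n k)"
  unfolding ksubsets_def by (rule finite_subset[of _ "Pow {1..n}"]) auto

lemma ksub_finite: "A \<in> ksubsets n k \<Longrightarrow> finite A"
  unfolding ksubsets_def using finite_subset by auto

lemma shift_inj: assumes "i \<noteq> j" shows "inj_on (shift_set i j F) F"
proof (rule inj_onI)
  fix A B assume A: "A \<in> F" and B: "B \<in> F" and eq: "shift_set i j F A = shift_set i j F B"
  show "A = B"
  proof (cases "j \<in> A \<and> i \<notin> A \<and> (A - {j}) \<union> {i} \<notin> F")
    case True
    show ?thesis
    proof (cases "j \<in> B \<and> i \<notin> B \<and> (B - {j}) \<union> {i} \<notin> F")
      case True2: True
      then have "(A - {j}) \<union> {i} = (B - {j}) \<union> {i}" using eq True by (simp add: shift_set_def)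
      moreover have "A = ((A - {j}) \<union> {i} - {i}) \<union> {j}" using True by auto
      moreover have "B = ((B - {j}) \<union> {i} - {i}) \<union> {j}" using True2 by auto
      ultimately show ?thesis by simp
    next
      case False
      then have "shift_set i j F B = B" unfolding shift_set_def by auto
      moreover have "shift_set i j F A = (A - {j}) \<union> {i}" using True unfolding shift_set_def by auto
      ultimately have "(A - {j}) \<union> {i} = B" using eq by simp
      with B True show ?thesis by simp
    qed
  next
    case False
    show ?thesis
    proof (cases "j \<in> B \<and> i \<notin> B \<and> (B - {j}) \<union> {i} \<notin> F")
      case True2: True
      then have "shift_set i j F B = (B - {j}) \<union> {i}" unfolding shift_set_def by auto
      moreover have "shift_set i j F A = A" using False unfolding shift_set_def by auto
      ultimately have "(B - {j}) \<union> {i} = A" using eq by simp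
      with A True2 show ?thesis by simp
    next
      case False2: False
      then have "shift_set i j F B = B" unfolding shift_set_def by auto
      moreover have "shift_set i j F A = A" using False unfolding shift_set_def by auto
      ultimately show ?thesis using eq by simp
    qed
  qed
qed

lemma card_swap: assumes "finite A" "j \<in> A" "i \<notin> A" shows "card ((A - {j}) \<union> {i}) = card A"
proof -
  have "A \<noteq> {}" using assms by auto
  then have "card A > 0" using assms(1) by (simp add: card_gt_0_iff)
  then show ?thesis using assms by (simp add: card_Diff_singleton)
qed

lemma card_swap': assumes "finite A" "j \<in> A" "i \<notin> A" shows "card (insert i (A - {j})) = card A"
  using card_swap[OF assms] by simp

lemma shift_ksub: assumes "A \<in> ksubsets n k" "i \<in> {1..n}" shows "shift_set i j F A \<in> ksubsets n k"
proof (cases "j \<in> A \<and> i \<notin> A \<and> (A - {j}) \<union> {i} \<notin> F")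
  case True
  then have "card ((A - {j}) \<union> {i}) = card A" using card_swap[OF ksub_finite[OF assms(1)]] by simp
  then show ?thesis using True assms unfolding shift_set_def ksubsets_def by auto
next
  case False
  then show ?thesis using assms unfolding shift_set_def by auto
qed

lemma shift_family_ksub: assumes "F \<subseteq> ksubsets n k" "i \<in> {1..n}" shows "shift_family i j F \<subseteq> ksubsets n k"
  using assms shift_ksub unfolding shift_family_def by blast

lemma one_sided:
  assumes tint: "t_intersecting t F" and fin: "finite A" and A: "A \<in> F" and B: "B \<in> F"
    and sA: "j \<in> A" "i \<notin> A" "(A - {j}) \<union> {i} \<notin> F" and sB: "shift_set i j F B = B"
  shows "t \<le> card (((A - {j}) \<union> {i}) \<inter> B)"
proof (cases "j \<in> B")
  case True
  show ?thesis
  proof (cases "i \<in> B")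
    case True2: True
    have "((A - {j}) \<union> {i}) \<inter> B = ((A \<inter> B) - {j}) \<union> {i}" using True2 by auto
    moreover have "card (((A \<inter> B) - {j}) \<union> {i}) = card (A \<inter> B)"
      by (rule card_swap) (use fin True sA in auto)
    ultimately show ?thesis using tint A B unfolding t_intersecting_def by auto
  next
    case False
    then have "(B - {j}) \<union> {i} \<in> F" using sB True unfolding shift_set_def
      by (metis (no_types, lifting) Diff_iff Un_iff insertI1 singletonD)
    moreover have "((A - {j}) \<union> {i}) \<inter> B = A \<inter> ((B - {j}) \<union> {i})" using False sA by auto
    ultimately show ?thesis using tint A unfolding t_intersecting_def by auto
  qed
next
  case False
  have "A \<inter> B \<subseteq> ((A - {j}) \<union> {i}) \<inter> B" using False by auto
  then have "card (A \<inter> B) \<le> card (((A - {j}) \<union> {i}) \<inter> B)"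
    by (rule card_mono[rotated]) (use fin in auto)
  moreover have "t \<le> card (A \<inter> B)" using tint A B unfolding t_intersecting_def by auto
  ultimately show ?thesis by linarith
qed

lemma shift_tint:
  assumes tint: "t_intersecting t F" and fin: "\<forall>A\<in>F. finite A"
  shows "t_intersecting t (shift_family i j F)"
  unfolding t_intersecting_def shift_family_def
proof (intro ballI, elim imageE)
  fix G1 G2 A B assume G1: "G1 = shift_set i j F A" and A: "A \<in> F" and G2: "G2 = shift_set i j F B" and B: "B \<in> F"
  show "t \<le> card (G1 \<inter> G2)"
  proof (cases "j \<in> A \<and> i \<notin> A \<and> (A - {j}) \<union> {i} \<notin> F")
    case True
    show ?thesis
    proof (cases "j \<in> B \<and> i \<notin> B \<and> (B - {j}) \<union> {i} \<notin> F")
      case True2: True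
      have "G1 \<inter> G2 = ((A \<inter> B) - {j}) \<union> {i}" using G1 G2 True True2 by (auto simp: shift_set_def)
      moreover have "card (((A \<inter> B) - {j}) \<union> {i}) = card (A \<inter> B)"
        by (rule card_swap) (use fin A True True2 in auto)
      ultimately show ?thesis using tint A B unfolding t_intersecting_def by auto
    next
      case False
      then have "shift_set i j F B = B" unfolding shift_set_def by auto
      then show ?thesis using one_sided[OF tint _ A B, of j i] True fin A G1 G2
        by (simp add: shift_set_def)
    qed
  next
    case False
    then have sA: "shift_set i j F A = A" unfolding shift_set_def by auto
    show ?thesis
    proof (cases "j \<in> B \<and> i \<notin> B \<and> (B - {j}) \<union> {i} \<notin> F")
      case True2: True
      then show ?thesis using one_sided[OF tint _ B A, of j i] sA fin B G1 G2
        by (simp add: shift_set_def Int_commute)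
    next
      case False2: False
      then have "shift_set i j F B = B" unfolding shift_set_def by auto
      then show ?thesis using sA G1 G2 tint A B unfolding t_intersecting_def by auto
    qed
  qed
qed


lemma card_filter_sum: "finite F \<Longrightarrow> card {A\<in>F. P A} = (\<Sum>A\<in>F. if P A then 1 else 0::nat)"
  by (simp add: sum.If_cases Int_def)

lemma codeg_shift: assumes "finite F" "i \<noteq> j"
  shows "codeg (shift_family i j F) E = card {A\<in>F. E \<subseteq> shift_set i j F A}"
proof -
  have "{G \<in> shift_family i j F. E \<subseteq> G} = shift_set i j F ` {A\<in>F. E \<subseteq> shift_set i j F A}"
    unfolding shift_family_def by auto
  moreover have "inj_on (shift_set i j F) {A\<in>F. E \<subseteq> shift_set i j F A}"
    using shift_inj[OF assms(2)] by (rule inj_on_subset) auto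
  ultimately show ?thesis unfolding codeg_def by (simp add: card_image)
qed

lemma codeg_L0: assumes "finite F" "i \<noteq> j" "(i \<in> E) = (j \<in> E)"
  shows "codeg (shift_family i j F) E = codeg F E"
proof -
  have "{A\<in>F. E \<subseteq> shift_set i j F A} = {A\<in>F. E \<subseteq> A}"
    using assms(3) unfolding shift_set_def by auto
  then show ?thesis using codeg_shift[OF assms(1,2)] unfolding codeg_def by simp
qed

lemma codeg_L1: assumes "finite F" "i \<noteq> j" "j \<in> E"
  shows "codeg (shift_family i j F) E \<le> codeg F E"
proof -
  have "{A\<in>F. E \<subseteq> shift_set i j F A} \<subseteq> {A\<in>F. E \<subseteq> A}"
    using assms(3) unfolding shift_set_def by auto
  then show ?thesis using codeg_shift[OF assms(1,2)] assms(1) unfolding codeg_def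
    by (simp add: card_mono)
qed

lemma codeg_L2: assumes "finite F" "i \<noteq> j" "j \<in> E" "i \<notin> E"
  shows "codeg F E + codeg F (insert i (E - {j})) =
         codeg (shift_family i j F) E + codeg (shift_family i j F) (insert i (E - {j}))"
proof -
  let ?E' = "insert i (E - {j})"
  let ?d = "shift_set i j F"
  have pw: "(if E \<subseteq> A then 1 else 0) + (if ?E' \<subseteq> A then 1 else 0) =
            (if E \<subseteq> ?d A then 1 else 0) + (if ?E' \<subseteq> ?d A then 1 else (0::nat))" for A
  proof (cases "j \<in> A \<and> i \<notin> A \<and> (A - {j}) \<union> {i} \<notin> F")
    case True
    then have dA: "?d A = insert i (A - {j})" unfolding shift_set_def by auto
    have "E \<subseteq> A \<longleftrightarrow> ?E' \<subseteq> insert i (A - {j})"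
    proof
      assume "E \<subseteq> A" then show "?E' \<subseteq> insert i (A - {j})" by auto
    next
      assume h: "?E' \<subseteq> insert i (A - {j})"
      show "E \<subseteq> A"
      proof
        fix x assume "x \<in> E"
        then show "x \<in> A" using h True assms(3,4) by (cases "x = j") auto
      qed
    qed
    moreover have "\<not> ?E' \<subseteq> A" using True by auto
    moreover have "\<not> E \<subseteq> insert i (A - {j})" using assms(2,3) by auto
    ultimately show ?thesis using dA by simp
  next
    case False
    then have "?d A = A" unfolding shift_set_def by auto
    then show ?thesis by simp
  qed
  have "codeg F E + codeg F ?E' = (\<Sum>A\<in>F. (if E \<subseteq> A then 1 else 0) + (if ?E' \<subseteq> A then 1 else 0))"
    unfolding codeg_def using assms(1) by (simp add: card_filter_sum sum.distrib)
  also have "\<dots> = (\<Sum>A\<in>F. (if E \<subseteq> ?d A then 1 else 0) + (if ?E' \<subseteq> ?d A then 1 else 0))"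
    using pw by simp
  also have "\<dots> = card {A\<in>F. E \<subseteq> ?d A} + card {A\<in>F. ?E' \<subseteq> ?d A}"
    using assms(1) by (simp add: card_filter_sum sum.distrib)
  finally show ?thesis using codeg_shift[OF assms(1,2)] by simp
qed

lemma codeg_L3: assumes "finite F" "i \<noteq> j" "j \<in> E" "i \<notin> E"
  shows "codeg F E \<le> codeg (shift_family i j F) (insert i (E - {j}))"
proof -
  let ?E' = "insert i (E - {j})"
  let ?d = "shift_set i j F"
  define \<psi> where "\<psi> A = (if i \<in> A then A else insert i (A - {j}))" for A :: "nat set"
  have fin': "finite (shift_family i j F)" using assms(1) unfolding shift_family_def by simp
  have "inj_on \<psi> {A\<in>F. E \<subseteq> A}"
  proof (rule inj_onI)
    fix A B assume A: "A \<in> {A\<in>F. E \<subseteq> A}" and B: "B \<in> {A\<in>F. E \<subseteq> A}" and eq: "\<psi> A = \<psi> B"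
    have jA: "j \<in> A" "j \<in> B" using A B assms(3) by auto
    show "A = B"
    proof (cases "i \<in> A")
      case True
      show ?thesis
      proof (cases "i \<in> B")
        case True
        then show ?thesis using eq \<open>i \<in> A\<close> unfolding \<psi>_def by simp
      next
        case False
        then have "\<psi> B = insert i (B - {j})" unfolding \<psi>_def by simp
        moreover have "\<psi> A = A" using True unfolding \<psi>_def by simp
        ultimately have "j \<notin> \<psi> A" using eq assms(2) by auto
        then show ?thesis using jA \<open>\<psi> A = A\<close> by simp
      qed
    next
      case False
      show ?thesis
      proof (cases "i \<in> B")
        case True
        then have "\<psi> B = B" unfolding \<psi>_def by simp
        moreover have "\<psi> A = insert i (A - {j})" using False unfolding \<psi>_def by simp
        ultimately have "j \<notin> \<psi> B" using eq assms(2) by auto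
        then show ?thesis using jA \<open>\<psi> B = B\<close> by simp
      next
        case False2: False
        have "insert i (A - {j}) = insert i (B - {j})" using eq False False2 unfolding \<psi>_def by simp
        moreover have "A = (insert i (A - {j}) - {i}) \<union> {j}" using False jA by auto
        moreover have "B = (insert i (B - {j}) - {i}) \<union> {j}" using False2 jA by auto
        ultimately show ?thesis by simp
      qed
    qed
  qed
  moreover have "\<psi> ` {A\<in>F. E \<subseteq> A} \<subseteq> {G \<in> shift_family i j F. ?E' \<subseteq> G}"
  proof
    fix G assume "G \<in> \<psi> ` {A\<in>F. E \<subseteq> A}"
    then obtain A where A: "A \<in> F" "E \<subseteq> A" and G: "G = \<psi> A" by auto
    have jA: "j \<in> A" using A assms(3) by auto
    show "G \<in> {G \<in> shift_family i j F. ?E' \<subseteq> G}"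
    proof (cases "i \<in> A")
      case True
      then have "G = A" "?d A = A" using G unfolding \<psi>_def shift_set_def by auto
      then show ?thesis using A True unfolding shift_family_def by force
    next
      case False
      then have G2: "G = insert i (A - {j})" using G unfolding \<psi>_def by simp
      have "?E' \<subseteq> G" using G2 A by auto
      moreover have "G \<in> shift_family i j F"
      proof (cases "(A - {j}) \<union> {i} \<in> F")
        case True
        then have "?d ((A - {j}) \<union> {i}) = (A - {j}) \<union> {i}" unfolding shift_set_def by auto
        then have "G = ?d ((A - {j}) \<union> {i})" using G2 by simp
        then show ?thesis using True unfolding shift_family_def by blast
      next
        case False2: False
        then have "?d A = (A - {j}) \<union> {i}" using jA False unfolding shift_set_def by auto
        then have "G = ?d A" using G2 by simp
        then show ?thesis using A unfolding shift_family_def by blast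
      qed
      ultimately show ?thesis by simp
    qed
  qed
  ultimately have "card {A\<in>F. E \<subseteq> A} \<le> card {G \<in> shift_family i j F. ?E' \<subseteq> G}"
  proof -
    assume inj: "inj_on \<psi> {A\<in>F. E \<subseteq> A}" and sub: "\<psi> ` {A\<in>F. E \<subseteq> A} \<subseteq> {G \<in> shift_family i j F. ?E' \<subseteq> G}"
    have "card {A\<in>F. E \<subseteq> A} = card (\<psi> ` {A\<in>F. E \<subseteq> A})" using card_image[OF inj] by simp
    also have "\<dots> \<le> card {G \<in> shift_family i j F. ?E' \<subseteq> G}" using sub fin' by (intro card_mono) auto
    finally show ?thesis .
  qed
  then show ?thesis unfolding codeg_def by simp
qed

lemma sq_ineq: fixes p q p' q' :: nat
  assumes "p' \<le> p" "p \<le> q'" "p + q = p' + q'"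
  shows "p^2 + q^2 \<le> p'^2 + q'^2"
proof -
  obtain a where a: "p = p' + a" using assms(1) le_Suc_ex by blast
  obtain c where c: "q' = p + c" using assms(2) le_Suc_ex by blast
  have q: "q = p' + c" using assms(3) a c by simp
  show ?thesis unfolding a c q by (simp add: power2_eq_square algebra_simps)
qed


lemma sum_split3:
  fixes f :: "nat set \<Rightarrow> nat"
  assumes "i \<in> {1..n}" "j \<in> {1..n}" "i \<noteq> j"
  shows "(\<Sum>E\<in>ksubsets n m. f E) =
     (\<Sum>E\<in>{E\<in>ksubsets n m. (i \<in> E) = (j \<in> E)}. f E) +
     (\<Sum>E\<in>{E\<in>ksubsets n m. j \<in> E \<and> i \<notin> E}. f E + f (insert i (E - {j})))"
proof -
  let ?K = "ksubsets n m"
  let ?Kz = "{E\<in>?K. (i \<in> E) = (j \<in> E)}"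
  let ?Kj = "{E\<in>?K. j \<in> E \<and> i \<notin> E}"
  let ?Ki = "{E\<in>?K. i \<in> E \<and> j \<notin> E}"
  define \<phi> where "\<phi> E = insert i (E - {j})" for E :: "nat set"
  have fin: "finite ?K" by (rule finite_ksubsets)
  have K: "?K = ?Kz \<union> (?Kj \<union> ?Ki)" by auto
  have f0: "finite ?Kz" "finite ?Kj" "finite ?Ki" using fin by auto
  have "(\<Sum>E\<in>?K. f E) = (\<Sum>E\<in>?Kz. f E) + ((\<Sum>E\<in>?Kj. f E) + (\<Sum>E\<in>?Ki. f E))"
  proof -
    have "(\<Sum>E\<in>?K. f E) = (\<Sum>E\<in>?Kz \<union> (?Kj \<union> ?Ki). f E)" using K by simp
    also have "\<dots> = (\<Sum>E\<in>?Kz. f E) + (\<Sum>E\<in>?Kj \<union> ?Ki. f E)"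
      by (rule sum.union_disjoint) (use f0 in auto)
    also have "(\<Sum>E\<in>?Kj \<union> ?Ki. f E) = (\<Sum>E\<in>?Kj. f E) + (\<Sum>E\<in>?Ki. f E)"
      by (rule sum.union_disjoint) (use f0 in auto)
    finally show ?thesis .
  qed
  moreover have inj: "inj_on \<phi> ?Kj"
  proof (rule inj_onI)
    fix A B assume A: "A \<in> ?Kj" and B: "B \<in> ?Kj" and eq: "\<phi> A = \<phi> B"
    have "A = (\<phi> A - {i}) \<union> {j}" using A unfolding \<phi>_def by auto
    moreover have "B = (\<phi> B - {i}) \<union> {j}" using B unfolding \<phi>_def by auto
    ultimately show "A = B" using eq by simp
  qed
  moreover have img: "?Ki = \<phi> ` ?Kj"
  proof
    show "\<phi> ` ?Kj \<subseteq> ?Ki"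
    proof
      fix G assume "G \<in> \<phi> ` ?Kj"
      then obtain E where E: "E \<in> ?Kj" and G: "G = \<phi> E" by auto
      have "finite E" using E ksub_finite by blast
      then have "card G = card E" using E card_swap'[of E j i] unfolding G \<phi>_def by simp
      then show "G \<in> ?Ki" using E assms unfolding G \<phi>_def ksubsets_def by auto
    qed
  next
    show "?Ki \<subseteq> \<phi> ` ?Kj"
    proof
      fix G assume G: "G \<in> ?Ki"
      let ?E = "insert j (G - {i})"
      have "finite G" using G ksub_finite by blast
      then have "card ?E = card G" using G card_swap'[of G i j] by simp
      then have "?E \<in> ?Kj" using G assms unfolding ksubsets_def by auto
      moreover have "G = \<phi> ?E" using G assms(3) unfolding \<phi>_def by auto
      ultimately show "G \<in> \<phi> ` ?Kj" by blast
    qed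
  qed
  have "(\<Sum>E\<in>?Ki. f E) = (\<Sum>E\<in>?Kj. f (\<phi> E))"
    unfolding img by (simp add: sum.reindex[OF inj])
  ultimately show ?thesis unfolding \<phi>_def by (simp add: sum.distrib)
qed

lemma co2_shift:
  assumes F: "F \<subseteq> ksubsets n k" and ij: "i \<in> {1..n}" "j \<in> {1..n}" "i \<noteq> j"
  shows "co2 n k F \<le> co2 n k (shift_family i j F)"
proof -
  let ?F' = "shift_family i j F"
  have finF: "finite F" using F finite_ksubsets finite_subset by blast
  have "co2 n k F = (\<Sum>E\<in>{E\<in>ksubsets n (k-1). (i \<in> E) = (j \<in> E)}. (codeg F E)^2) +
     (\<Sum>E\<in>{E\<in>ksubsets n (k-1). j \<in> E \<and> i \<notin> E}. (codeg F E)^2 + (codeg F (insert i (E - {j})))^2)"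
    unfolding co2_def by (rule sum_split3[OF ij])
  also have "\<dots> \<le> (\<Sum>E\<in>{E\<in>ksubsets n (k-1). (i \<in> E) = (j \<in> E)}. (codeg ?F' E)^2) +
     (\<Sum>E\<in>{E\<in>ksubsets n (k-1). j \<in> E \<and> i \<notin> E}. (codeg ?F' E)^2 + (codeg ?F' (insert i (E - {j})))^2)"
  proof (rule add_mono)
    show "(\<Sum>E\<in>{E\<in>ksubsets n (k-1). (i \<in> E) = (j \<in> E)}. (codeg F E)^2) \<le>
          (\<Sum>E\<in>{E\<in>ksubsets n (k-1). (i \<in> E) = (j \<in> E)}. (codeg ?F' E)^2)"
      by (rule sum_mono) (simp add: codeg_L0[OF finF ij(3)])
    show "(\<Sum>E\<in>{E\<in>ksubsets n (k-1). j \<in> E \<and> i \<notin> E}. (codeg F E)^2 + (codeg F (insert i (E - {j})))^2) \<le>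
          (\<Sum>E\<in>{E\<in>ksubsets n (k-1). j \<in> E \<and> i \<notin> E}. (codeg ?F' E)^2 + (codeg ?F' (insert i (E - {j})))^2)"
    proof (rule sum_mono)
      fix E assume "E \<in> {E\<in>ksubsets n (k-1). j \<in> E \<and> i \<notin> E}"
      then have E: "j \<in> E" "i \<notin> E" by auto
      show "(codeg F E)^2 + (codeg F (insert i (E - {j})))^2 \<le> (codeg ?F' E)^2 + (codeg ?F' (insert i (E - {j})))^2"
        by (rule sq_ineq[OF codeg_L1[OF finF ij(3) E(1)] codeg_L3[OF finF ij(3) E] codeg_L2[OF finF ij(3) E]])
    qed
  qed
  also have "\<dots> = co2 n k ?F'"
    unfolding co2_def by (rule sum_split3[OF ij, symmetric])
  finally show ?thesis .
qed


lemma sum_swap_set: assumes "finite A" "j \<in> A" "i \<notin> A"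
  shows "\<Sum>(insert i (A - {j})) + j = \<Sum>A + i"
proof -
  have "\<Sum>(insert i (A - {j})) = i + \<Sum>(A - {j})" using assms by simp
  moreover have "\<Sum>A = j + \<Sum>(A - {j})" using assms by (simp add: sum.remove)
  ultimately show ?thesis by (simp add: algebra_simps)
qed

definition wt :: "nat set set \<Rightarrow> nat" where "wt G = (\<Sum>A\<in>G. \<Sum>A)"

lemma weight_shift:
  assumes fin: "finite F" "\<forall>A\<in>F. finite A" and ij: "i < j" and ne: "shift_family i j F \<noteq> F"
  shows "wt (shift_family i j F) < wt F"
proof -
  let ?d = "shift_set i j F"
  have inj: "inj_on ?d F" using shift_inj ij by simp
  have "wt (shift_family i j F) = (\<Sum>A\<in>F. \<Sum>(?d A))"
    unfolding wt_def shift_family_def by (simp add: sum.reindex[OF inj])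
  also have "\<dots> < (\<Sum>A\<in>F. \<Sum>A)"
  proof (rule sum_strict_mono_ex1[OF fin(1)])
    show "\<forall>A\<in>F. \<Sum>(?d A) \<le> \<Sum>A"
    proof
      fix A assume A: "A \<in> F"
      show "\<Sum>(?d A) \<le> \<Sum>A"
      proof (cases "j \<in> A \<and> i \<notin> A \<and> (A - {j}) \<union> {i} \<notin> F")
        case True
        then have "?d A = insert i (A - {j})" unfolding shift_set_def by auto
        then show ?thesis using sum_swap_set[of A j i] True fin A ij by simp
      next
        case False
        then show ?thesis unfolding shift_set_def by auto
      qed
    qed
    show "\<exists>A\<in>F. \<Sum>(?d A) < \<Sum>A"
    proof (rule ccontr)
      assume "\<not> (\<exists>A\<in>F. \<Sum>(?d A) < \<Sum>A)"
      then have "\<forall>A\<in>F. ?d A = A"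
      proof (intro ballI)
        fix A assume h: "\<not> (\<exists>A\<in>F. \<Sum>(?d A) < \<Sum>A)" and A: "A \<in> F"
        show "?d A = A"
        proof (rule ccontr)
          assume "?d A \<noteq> A"
          then have True: "j \<in> A \<and> i \<notin> A \<and> (A - {j}) \<union> {i} \<notin> F" and
            dA: "?d A = insert i (A - {j})" unfolding shift_set_def by (auto split: if_splits)
          then have "\<Sum>(?d A) < \<Sum>A" using sum_swap_set[of A j i] fin A ij by simp
          then show False using h A by blast
        qed
      qed
      then have "shift_family i j F = F" unfolding shift_family_def by simp
      then show False using ne by simp
    qed
  qed
  finally show ?thesis unfolding wt_def .
qed

lemma co2_insert:
  assumes F: "F \<subseteq> ksubsets n k" and C: "C \<in> ksubsets n k" "C \<notin> F" and k: "1 \<le> k"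
  shows "co2 n k F < co2 n k (insert C F)"
  unfolding co2_def
proof (rule sum_strict_mono_ex1[OF finite_ksubsets])
  have finF: "finite F" using F finite_ksubsets finite_subset by blast
  have mono: "codeg F E \<le> codeg (insert C F) E" for E
    unfolding codeg_def using finF by (intro card_mono) auto
  show "\<forall>E\<in>ksubsets n (k - 1). (codeg F E)\<^sup>2 \<le> (codeg (insert C F) E)\<^sup>2"
    using mono by (simp add: power_mono)
  have "C \<noteq> {}" using C k unfolding ksubsets_def by auto
  then obtain c where c: "c \<in> C" by auto
  have finC: "finite C" using C ksub_finite by blast
  let ?E = "C - {c}"
  have "?E \<in> ksubsets n (k - 1)" using C c finC unfolding ksubsets_def by auto
  moreover have "codeg F ?E < codeg (insert C F) ?E"
  proof -
    have "{G \<in> insert C F. ?E \<subseteq> G} = insert C {G\<in>F. ?E \<subseteq> G}" by auto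
    then have "codeg (insert C F) ?E = Suc (codeg F ?E)"
      unfolding codeg_def using finF C(2) by simp
    then show ?thesis by simp
  qed
  ultimately show "\<exists>E\<in>ksubsets n (k - 1). (codeg F E)\<^sup>2 < (codeg (insert C F) E)\<^sup>2"
    by (intro bexI[of _ ?E]) (auto simp: power_strict_mono)
qed



lemma main_struct:
  assumes Fk: "F \<subseteq> ksubsets n k" and tint: "t_intersecting t F" and ntr: "\<not> trivial_family t F"
    and t2: "2 \<le> t" and tk: "t \<le> k"
    and KEY: "\<And>x y. 1 \<le> x \<Longrightarrow> x < y \<Longrightarrow> y \<le> n \<Longrightarrow> shift_family x y F \<noteq> F \<Longrightarrow> trivial_family t (shift_family x y F)"
    and MAXL: "\<And>C. C \<in> ksubsets n k \<Longrightarrow> t_intersecting t (insert C F) \<Longrightarrow> C \<in> F"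
  shows "left_compressed n F"
proof (rule ccontr)
  assume "\<not> left_compressed n F"
  then obtain i j where ij: "1 \<le> i" "i < j" "j \<le> n" and ne: "shift_family i j F \<noteq> F"
    unfolding left_compressed_def by auto
  have finF: "finite F" using Fk finite_ksubsets finite_subset by blast
  have finA: "\<And>A. A \<in> F \<Longrightarrow> finite A" using Fk ksub_finite by blast
  have subn: "\<And>A. A \<in> F \<Longrightarrow> A \<subseteq> {1..n}" and cardk: "\<And>A. A \<in> F \<Longrightarrow> card A = k"
    using Fk unfolding ksubsets_def by auto
  obtain T where T: "card T = t" "\<And>G. G \<in> shift_family i j F \<Longrightarrow> T \<subseteq> G"
    using KEY[OF ij ne] unfolding trivial_family_def by blast
  have finT: "finite T"
  proof (rule ccontr)
    assume "infinite T" then have "card T = 0" by simp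
    with T(1) t2 show False by simp
  qed
  obtain A0 where A0: "A0 \<in> F" "\<not> T \<subseteq> A0" using ntr T(1) unfolding trivial_family_def by blast
  have TdA0: "T \<subseteq> shift_set i j F A0" using T(2) A0(1) unfolding shift_family_def by blast
  then have A0s: "j \<in> A0" "i \<notin> A0" "(A0 - {j}) \<union> {i} \<notin> F"
    using A0(2) unfolding shift_set_def by (auto split: if_splits)
  then have TdA0': "T \<subseteq> (A0 - {j}) \<union> {i}" using TdA0 unfolding shift_set_def by simp
  have iT: "i \<in> T" using TdA0' A0(2) by blast
  have jT: "j \<notin> T" using TdA0' ij(2) by auto
  define T' where "T' = T - {i}"
  have cT': "card T' = t - 1" unfolding T'_def using iT finT T(1) by simp
  have iT': "i \<notin> T'" and jT': "j \<notin> T'" unfolding T'_def using jT by auto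
  have finT': "finite T'" using finT unfolding T'_def by simp
  have structF: "T' \<subseteq> C \<and> (i \<in> C \<or> j \<in> C) \<and> (j \<in> C \<and> i \<notin> C \<longrightarrow> (C - {j}) \<union> {i} \<notin> F)"
    if C: "C \<in> F" for C
  proof -
    have "T \<subseteq> shift_set i j F C" using T(2) C unfolding shift_family_def by blast
    then show ?thesis using iT ij(2) unfolding T'_def shift_set_def by (auto split: if_splits)
  qed
  obtain B0 where B0: "B0 \<in> F" "i \<in> B0" "j \<notin> B0"
  proof (rule ccontr)
    assume "\<not> thesis"
    then have allj: "\<forall>C\<in>F. \<not> (i \<in> C \<and> j \<notin> C)" using that by blast
    have "card (insert j T') = t" using cT' jT' finT' t2 by simp
    moreover have "\<forall>C\<in>F. insert j T' \<subseteq> C" using allj structF by blast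
    ultimately show False using ntr unfolding trivial_family_def by blast
  qed
  have kt: "t + 1 \<le> k"
  proof -
    have "t \<le> card (A0 \<inter> B0)" using tint A0(1) B0(1) unfolding t_intersecting_def by blast
    also have "\<dots> \<le> card (A0 - {j})" using finA[OF A0(1)] B0(3) by (intro card_mono) auto
    also have "\<dots> = k - 1" using cardk[OF A0(1)] A0s(1) finA[OF A0(1)] by simp
    finally show ?thesis using tk t2 by linarith
  qed
  have nk: "k + 1 \<le> n"
  proof -
    have "k \<le> n" using cardk[OF A0(1)] subn[OF A0(1)] card_mono[of "{1..n}" A0] by simp
    moreover have "k \<noteq> n"
    proof
      assume "k = n"
      then have "A0 = {1..n}" "B0 = {1..n}" using cardk A0(1) B0(1) subn
        by (metis card_atLeastAtMost card_subset_eq diff_Suc_1 finite_atLeastAtMost)+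
      then show False using A0s(1) B0(3) by simp
    qed
    ultimately show ?thesis by simp
  qed
  have T'n: "T' \<subseteq> {1..n}" using structF[OF A0(1)] subn[OF A0(1)] by blast
  define W where "W = T' \<union> {i, j}"
  have cW: "card W = t + 1" unfolding W_def using cT' iT' jT' finT' ij(2) t2 by simp
  have Wn: "W \<subseteq> {1..n}" unfolding W_def using T'n ij by auto
  have BIG: "C \<in> F" if C: "C \<subseteq> {1..n}" "card C = k" "W \<subseteq> C" for C
  proof -
    have finC: "finite C" using C(1) finite_subset by blast
    have CD: "t \<le> card (C \<inter> D)" if D: "D \<in> F" for D
    proof -
      from structF[OF D] obtain x where x: "x \<in> {i, j}" "x \<in> D" "T' \<subseteq> D" by blast
      have "card (insert x T') = t" using x(1) iT' jT' cT' finT' t2 by auto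
      moreover have "insert x T' \<subseteq> C \<inter> D" using x C(3) unfolding W_def by auto
      ultimately show ?thesis using card_mono[of "C \<inter> D" "insert x T'"] finC by simp
    qed
    have "t_intersecting t (insert C F)"
      unfolding t_intersecting_def
    proof (intro ballI)
      fix X Y assume X: "X \<in> insert C F" and Y: "Y \<in> insert C F"
      show "t \<le> card (X \<inter> Y)"
      proof (cases "X = C")
        case True
        show ?thesis
        proof (cases "Y = C")
          case True
          then show ?thesis using \<open>X = C\<close> C(2) tk by simp
        next
          case False
          then show ?thesis using \<open>X = C\<close> Y CD by simp
        qed
      next
        case False
        show ?thesis
        proof (cases "Y = C")
          case True
          then show ?thesis using False X CD[of X] by (simp add: Int_commute)
        next
          case False2: False
          then show ?thesis using False X Y tint unfolding t_intersecting_def by simp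
        qed
      qed
    qed
    moreover have "C \<in> ksubsets n k" using C unfolding ksubsets_def by simp
    ultimately show ?thesis using MAXL by blast
  qed
  define U where "U = {1..n} - W"
  have AVOID: "\<exists>C. C \<subseteq> {1..n} \<and> card C = k \<and> W \<subseteq> C \<and> u \<notin> C" if u: "u \<in> U" for u
  proof -
    have cU: "card U = n - (t + 1)" unfolding U_def using Wn cW by (simp add: card_Diff_subset finite_subset)
    have "card (U - {u}) = n - (t + 1) - 1" using cU u unfolding U_def by simp
    then have "k - t - 1 \<le> card (U - {u})" using nk kt by simp
    then obtain R where R: "R \<subseteq> U - {u}" "card R = k - t - 1"
      by (meson obtain_subset_with_card_n)
    have finR: "finite R" using R(1) unfolding U_def by (meson finite_Diff finite_atLeastAtMost finite_subset)
    have finW: "finite W" using Wn finite_subset by blast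
    have "card (W \<union> R) = card W + card R"
      by (rule card_Un_disjoint) (use finR finW R(1) in \<open>auto simp: U_def\<close>)
    then have "card (W \<union> R) = k" using cW R(2) kt by simp
    moreover have "W \<union> R \<subseteq> {1..n}" using Wn R(1) unfolding U_def by auto
    moreover have "u \<notin> W \<union> R" using u R(1) unfolding U_def by auto
    ultimately show ?thesis by blast
  qed
  have Un: "U \<subseteq> {1..n}" unfolding U_def by auto
  have USTABLE: "shift_family x y F = F" if xy: "x \<in> U" "y \<in> U" "x < y" for x y
  proof (rule ccontr)
    assume ne2: "shift_family x y F \<noteq> F"
    have x1: "1 \<le> x" "y \<le> n" using xy Un by auto
    obtain T2 where T2: "card T2 = t" "\<And>G. G \<in> shift_family x y F \<Longrightarrow> T2 \<subseteq> G"
      using KEY[OF x1(1) xy(3) x1(2) ne2] unfolding trivial_family_def by blast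
    have xW: "x \<notin> W" "y \<notin> W" using xy unfolding U_def by auto
    have mem: "shift_set x y F C \<in> shift_family x y F" if "C \<in> F" for C
      using that unfolding shift_family_def by blast
    have "j \<notin> shift_set x y F B0" using B0(3) xW unfolding shift_set_def W_def by auto
    then have jT2: "j \<notin> T2" using T2(2)[OF mem[OF B0(1)]] by blast
    have "i \<notin> shift_set x y F A0" using A0s(2) xW unfolding shift_set_def W_def by auto
    then have iT2: "i \<notin> T2" using T2(2)[OF mem[OF A0(1)]] by blast
    have "shift_set x y F A0 \<in> ksubsets n k"
      using shift_ksub[of A0 n k x y F] Fk A0(1) xy(1) Un by (meson in_mono)
    then have T2n: "T2 \<subseteq> {1..n}" using T2(2)[OF mem[OF A0(1)]] unfolding ksubsets_def by auto
    have vU: "v \<notin> T2" if v: "v \<in> U" for v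
    proof
      assume vT2: "v \<in> T2"
      obtain C where C: "C \<subseteq> {1..n}" "card C = k" "W \<subseteq> C" "v \<notin> C" using AVOID[OF v] by blast
      have CF: "C \<in> F" using BIG C by blast
      have "shift_set x y F C = C"
      proof (cases "y \<in> C \<and> x \<notin> C")
        case True
        have finC: "finite C" using C(1) finite_subset by blast
        have "(C - {y}) \<union> {x} \<in> F"
        proof (rule BIG)
          show "(C - {y}) \<union> {x} \<subseteq> {1..n}" using C(1) xy Un by auto
          show "card ((C - {y}) \<union> {x}) = k" using card_swap[OF finC] True C(2) by simp
          show "W \<subseteq> (C - {y}) \<union> {x}" using C(3) xW by auto
        qed
        then show ?thesis unfolding shift_set_def by auto
      next
        case False
        then show ?thesis unfolding shift_set_def by auto
      qed
      then have "T2 \<subseteq> C" using T2(2)[OF mem[OF CF]] by simp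
      then show False using vT2 C(4) by blast
    qed
    have "T2 \<subseteq> T'"
    proof
      fix v assume v: "v \<in> T2"
      then have "v \<notin> U" using vU by blast
      then show "v \<in> T'" using v T2n iT2 jT2 unfolding U_def W_def by auto
    qed
    then have "card T2 \<le> card T'" using finT' by (simp add: card_mono)
    then show False using T2(1) cT' t2 by simp
  qed
  have DOWN: "z \<in> A"
    if A: "A \<in> F" "a \<in> A" "b \<notin> A" "a \<in> W" "b \<in> W"
      and minA: "\<forall>C. C \<in> F \<and> a \<in> C \<and> b \<notin> C \<longrightarrow> \<Sum>A \<le> \<Sum>C"
      and yz: "y \<in> A" "y \<in> U" "z \<in> U" "z < y" for A a b y z
  proof (rule ccontr)
    assume zA: "z \<notin> A"
    have st: "shift_family z y F = F" using USTABLE yz by blast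
    have A'F: "(A - {y}) \<union> {z} \<in> F"
    proof (rule ccontr)
      assume "(A - {y}) \<union> {z} \<notin> F"
      then have "shift_set z y F A = (A - {y}) \<union> {z}" using yz(1) zA unfolding shift_set_def by simp
      then have "(A - {y}) \<union> {z} \<in> shift_family z y F" using A(1) unfolding shift_family_def by (metis image_eqI)
      then show False using st \<open>(A - {y}) \<union> {z} \<notin> F\<close> by simp
    qed
    have "a \<noteq> y" "b \<noteq> z" using A(4,5) yz unfolding U_def by auto
    then have "a \<in> (A - {y}) \<union> {z}" "b \<notin> (A - {y}) \<union> {z}" using A(2,3) by auto
    then have "\<Sum>A \<le> \<Sum>((A - {y}) \<union> {z})" using minA A'F by blast
    moreover have "\<Sum>(insert z (A - {y})) + y = \<Sum>A + z" using sum_swap_set[OF finA[OF A(1)] yz(1) zA] .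
    ultimately show False using yz(4) by simp
  qed
  obtain A where A: "A \<in> F" "j \<in> A" "i \<notin> A" and minA: "\<forall>C. C \<in> F \<and> j \<in> C \<and> i \<notin> C \<longrightarrow> \<Sum>A \<le> \<Sum>C"
    using ex_has_least_nat[of "\<lambda>C. C \<in> F \<and> j \<in> C \<and> i \<notin> C" A0 "\<lambda>C. \<Sum>C"] A0(1) A0s by auto
  obtain B where B: "B \<in> F" "i \<in> B" "j \<notin> B" and minB: "\<forall>C. C \<in> F \<and> i \<in> C \<and> j \<notin> C \<longrightarrow> \<Sum>B \<le> \<Sum>C"
    using ex_has_least_nat[of "\<lambda>C. C \<in> F \<and> i \<in> C \<and> j \<notin> C" B0 "\<lambda>C. \<Sum>C"] B0 by auto
  have ijW: "i \<in> W" "j \<in> W" unfolding W_def by auto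
  have decomp: "C = (C \<inter> W) \<union> (C \<inter> U)" if "C \<in> F" for C
    using subn[OF that] unfolding U_def by auto
  have AW: "A \<inter> W = insert j T'" using structF[OF A(1)] A unfolding W_def by auto
  have BW: "B \<inter> W = insert i T'" using structF[OF B(1)] B unfolding W_def by auto
  have cardsplit: "card C = card (C \<inter> W) + card (C \<inter> U)" if "C \<in> F" for C
  proof -
    have "card C = card ((C \<inter> W) \<union> (C \<inter> U))" using decomp[OF that] by simp
    also have "\<dots> = card (C \<inter> W) + card (C \<inter> U)"
      by (rule card_Un_disjoint) (use finA[OF that] in \<open>auto simp: U_def\<close>)
    finally show ?thesis .
  qed
  have "card (insert j T') = card (insert i T')" using iT' jT' finT' by simp
  then have cardU: "card (A \<inter> U) = card (B \<inter> U)"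
    using cardsplit[OF A(1)] cardsplit[OF B(1)] cardk[OF A(1)] cardk[OF B(1)] AW BW by simp
  have DA: "z \<in> A" if "y \<in> A" "y \<in> U" "z \<in> U" "z < y" for y z
    using DOWN[OF A(1) A(2) A(3) ijW(2) ijW(1) minA that] .
  have DB: "z \<in> B" if "y \<in> B" "y \<in> U" "z \<in> U" "z < y" for y z
    using DOWN[OF B(1) B(2) B(3) ijW(1) ijW(2) minB that] .
  have finBU: "finite (B \<inter> U)" "finite (A \<inter> U)" using finA A(1) B(1) by auto
  have sub: "A \<inter> U \<subseteq> B \<inter> U"
  proof (rule ccontr)
    assume "\<not> A \<inter> U \<subseteq> B \<inter> U"
    then obtain a where a: "a \<in> A" "a \<in> U" "a \<notin> B" by auto
    have "B \<inter> U \<subseteq> A \<inter> U"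
    proof
      fix b assume b: "b \<in> B \<inter> U"
      have "b \<noteq> a" using a b by auto
      moreover have "\<not> a < b" using DB[of b a] b a by auto
      ultimately have "b < a" by simp
      then show "b \<in> A \<inter> U" using DA[of a b] a b by auto
    qed
    then have "B \<inter> U \<subset> A \<inter> U" using a by auto
    then have "card (B \<inter> U) < card (A \<inter> U)" using finBU by (simp add: psubset_card_mono)
    then show False using cardU by simp
  qed
  then have AUBU: "A \<inter> U = B \<inter> U" using cardU finBU by (simp add: card_subset_eq)
  have "(A - {j}) \<union> {i} = B"
  proof -
    have "(A - {j}) \<union> {i} = ((A \<inter> W) \<union> (A \<inter> U) - {j}) \<union> {i}" using decomp[OF A(1)] by simp
    also have "\<dots> = insert i T' \<union> (A \<inter> U)" using AW jT' ijW unfolding U_def by auto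
    also have "\<dots> = (B \<inter> W) \<union> (B \<inter> U)" using BW AUBU by simp
    also have "\<dots> = B" using decomp[OF B(1)] by simp
    finally show ?thesis .
  qed
  then show False using structF[OF A(1)] A B(1) by simp
qed


theorem corollary2p5:
  fixes t k n :: nat
  assumes "2 \<le> t" and "t \<le> k" and "k \<le> n"
    and "\<exists>\<G>. \<G> \<subseteq> ksubsets n k \<and> t_intersecting t \<G> \<and> \<not> trivial_family t \<G>"
  shows "\<exists>\<F>. \<F> \<subseteq> ksubsets n k \<and> left_compressed n \<F> \<and> t_intersecting t \<F>
             \<and> \<not> trivial_family t \<F>
             \<and> (\<forall>\<G>. \<G> \<subseteq> ksubsets n k \<and> t_intersecting t \<G> \<and> \<not> trivial_family t \<G>
                    \<longrightarrow> co2 n k \<G> \<le> co2 n k \<F>)"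
proof -
  define S where "S = {G. G \<subseteq> ksubsets n k \<and> t_intersecting t G \<and> \<not> trivial_family t G}"
  have finS: "finite S"
    by (rule finite_subset[of _ "Pow (ksubsets n k)"]) (auto simp: S_def finite_ksubsets)
  have neS: "S \<noteq> {}" using assms(4) unfolding S_def by auto
  define M where "M = Max (co2 n k ` S)"
  have Mge: "co2 n k G \<le> M" if "G \<in> S" for G
    unfolding M_def using finS that by simp
  have "M \<in> co2 n k ` S" unfolding M_def using finS neS by simp
  then obtain G0 where G0: "G0 \<in> S" "co2 n k G0 = M" by auto
  define S' where "S' = {G\<in>S. co2 n k G = M}"
  have "G0 \<in> S'" using G0 unfolding S'_def by simp
  then obtain F where F: "F \<in> S'" and minF: "\<forall>G. G \<in> S' \<longrightarrow> wt F \<le> wt G"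
    using ex_has_least_nat[of "\<lambda>G. G \<in> S'" G0 wt] by blast
  have Fk: "F \<subseteq> ksubsets n k" and tint: "t_intersecting t F" and ntr: "\<not> trivial_family t F"
    and coF: "co2 n k F = M" using F unfolding S'_def S_def by auto
  have finF: "finite F" using Fk finite_ksubsets finite_subset by blast
  have finA: "\<forall>A\<in>F. finite A" using Fk ksub_finite by blast
  have KEY: "trivial_family t (shift_family x y F)"
    if xy: "1 \<le> x" "x < y" "y \<le> n" "shift_family x y F \<noteq> F" for x y
  proof (rule ccontr)
    assume ntG: "\<not> trivial_family t (shift_family x y F)"
    have Gk: "shift_family x y F \<subseteq> ksubsets n k" using shift_family_ksub[OF Fk] xy by simp
    have Gt: "t_intersecting t (shift_family x y F)" using shift_tint[OF tint finA] .
    have GS: "shift_family x y F \<in> S" using Gk Gt ntG unfolding S_def by simp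
    have "co2 n k F \<le> co2 n k (shift_family x y F)" using co2_shift[OF Fk] xy by simp
    then have "shift_family x y F \<in> S'" using Mge[OF GS] coF GS unfolding S'_def by simp
    then have "wt F \<le> wt (shift_family x y F)" using minF by blast
    moreover have "wt (shift_family x y F) < wt F" using weight_shift[OF finF finA xy(2,4)] .
    ultimately show False by simp
  qed
  have MAXL: "C \<in> F" if C: "C \<in> ksubsets n k" "t_intersecting t (insert C F)" for C
  proof (rule ccontr)
    assume CF: "C \<notin> F"
    have "\<not> trivial_family t (insert C F)" using ntr unfolding trivial_family_def by blast
    then have "insert C F \<in> S" using C Fk unfolding S_def by simp
    then have "co2 n k (insert C F) \<le> M" using Mge by blast
    moreover have "co2 n k F < co2 n k (insert C F)" using co2_insert[OF Fk C(1) CF] assms(1,2) by simp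
    ultimately show False using coF by simp
  qed
  have lc: "left_compressed n F"
    by (rule main_struct[OF Fk tint ntr assms(1) assms(2) KEY MAXL])
  show ?thesis
    using Fk lc tint ntr Mge coF unfolding S_def by (intro exI[of _ F]) auto
qed

end
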